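(* Let $m,n$ be integers with $2\le m<n$, and let $G$ be a Latin square graph $\mathrm{LSG}(m,n)$ (associated with some transversal 2-design $\mathrm{TD}(m,n)$). Then $\alpha(\overline{G})=\Theta(\overline{G})=\vartheta(\overline{G})=n$.
   Context: Graphs are finite, simple, undirected; $\overline{G}$ is the complement, $\alpha$ the independence number, $\Theta(G)=\sup_{k\ge1}\alpha(G^{\boxtimes k})^{1/k}$ the Shannon capacity (with $\boxtimes$ the strong product: distinct $(g,h),(g',h')$ adjacent iff ($g=g'$ or $g\sim g'$) and ($h=h'$ or $h\sim h'$)), and $\vartheta(G)$ the Lovász theta function: the maximum of $\mathrm{Tr}(BJ)$ over positive semidefinite $B$ indexed by $V(G)$ with $\mathrm{Tr}B=1$ and $B_{i,j}=0$ for $\{i,j\}\in E(G)$, $J$ the all-ones matrix. A transversal 2-design $\mathrm{TD}(m,n)$ ($m\ge2,n\ge1$) is a triple $(X,\mathscr G,\mathscr B)$ where $X$ is a set of $mn$ points, $\mathscr G$ is a partition of $X$ into $m$ groups of $n$ points each, and $\mathscr B$ is a family of subsets (blocks) of $X$ such that every block contains exactly one point of each group and every two points in different groups lie together in exactly one block. The Latin square graph $\mathrm{LSG}(m,n)$ of such a design has vertex set $\mathscr B$, two distinct blocks being adjacent iff they intersect in exactly one point. *)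

theory Defs
  imports Complex_Main "HOL-Library.Disjoint_Sets" "HOL-Library.FuncSet"
begin

text \<open>A simple graph is given by a vertex set V and an adjacency relation E
  (assumed symmetric and irreflexive where relevant; all notions below only
  look at E on V).\<close>

definition complement_graph :: "('a \<Rightarrow> 'a \<Rightarrow> bool) \<Rightarrow> 'a \<Rightarrow> 'a \<Rightarrow> bool" where
  "complement_graph E x y \<longleftrightarrow> x \<noteq> y \<and> \<not> E x y"

definition independent_set :: "'a set \<Rightarrow> ('a \<Rightarrow> 'a \<Rightarrow> bool) \<Rightarrow> 'a set \<Rightarrow> bool" where
  "independent_set V E S \<longleftrightarrow> S \<subseteq> V \<and> (\<forall>x\<in>S. \<forall>y\<in>S. \<not> E x y)"

definition independence_number :: "'a set \<Rightarrow> ('a \<Rightarrow> 'a \<Rightarrow> bool) \<Rightarrow> nat" where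
  "independence_number V E = Max {card S | S. independent_set V E S}"

definition strong_power_vertices :: "'a set \<Rightarrow> nat \<Rightarrow> (nat \<Rightarrow> 'a) set" where
  "strong_power_vertices V k = PiE {..<k} (\<lambda>_. V)"

definition strong_power_adj :: "('a \<Rightarrow> 'a \<Rightarrow> bool) \<Rightarrow> nat \<Rightarrow> (nat \<Rightarrow> 'a) \<Rightarrow> (nat \<Rightarrow> 'a) \<Rightarrow> bool" where
  "strong_power_adj E k f g \<longleftrightarrow> f \<noteq> g \<and> (\<forall>i<k. f i = g i \<or> E (f i) (g i))"

definition shannon_capacity :: "'a set \<Rightarrow> ('a \<Rightarrow> 'a \<Rightarrow> bool) \<Rightarrow> real" where
  "shannon_capacity V E =
     (SUP k\<in>{1..}. root k (real (independence_number (strong_power_vertices V k) (strong_power_adj E k))))"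

definition psd_on :: "'a set \<Rightarrow> ('a \<Rightarrow> 'a \<Rightarrow> real) \<Rightarrow> bool" where
  "psd_on V B \<longleftrightarrow> (\<forall>i\<in>V. \<forall>j\<in>V. B i j = B j i) \<and>
     (\<forall>x :: 'a \<Rightarrow> real. (\<Sum>i\<in>V. \<Sum>j\<in>V. x i * B i j * x j) \<ge> 0)"

definition lovasz_theta :: "'a set \<Rightarrow> ('a \<Rightarrow> 'a \<Rightarrow> bool) \<Rightarrow> real" where
  "lovasz_theta V E = Sup {(\<Sum>i\<in>V. \<Sum>j\<in>V. B i j) | B.
      psd_on V B \<and> (\<Sum>i\<in>V. B i i) = 1 \<and> (\<forall>i\<in>V. \<forall>j\<in>V. E i j \<longrightarrow> B i j = 0)}"

definition transversal_design :: "nat \<Rightarrow> nat \<Rightarrow> 'p set \<Rightarrow> 'p set set \<Rightarrow> 'p set set \<Rightarrow> bool" where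
  "transversal_design m n X Gs Bs \<longleftrightarrow>
     m \<ge> 2 \<and> n \<ge> 1 \<and> finite X \<and> card X = m * n \<and>
     partition_on X Gs \<and> card Gs = m \<and> (\<forall>G\<in>Gs. card G = n) \<and>
     (\<forall>B\<in>Bs. B \<subseteq> X \<and> (\<forall>G\<in>Gs. card (B \<inter> G) = 1)) \<and>
     (\<forall>x\<in>X. \<forall>y\<in>X. (\<not> (\<exists>G\<in>Gs. x \<in> G \<and> y \<in> G)) \<longrightarrow> (\<exists>!B. B \<in> Bs \<and> x \<in> B \<and> y \<in> B))"

definition LSG_adj :: "'p set \<Rightarrow> 'p set \<Rightarrow> bool" where
  "LSG_adj B B' \<longleftrightarrow> B \<noteq> B' \<and> card (B \<inter> B') = 1"

end

theory Submission
  imports Defs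
begin


lemma gram_psd_power:
  fixes V :: "'a set" and R :: "'b set" and k :: nat
  assumes fin: "finite V" "finite R"
    and w: "\<And>r. r\<in>R \<Longrightarrow> w r \<ge> (0::real)"
    and G: "\<And>i j. i\<in>V \<Longrightarrow> j\<in>V \<Longrightarrow> Gm i j = (\<Sum>r\<in>R. w r * U r i * U r j)"
  shows "0 \<le> (\<Sum>f\<in>PiE {..<k} (\<lambda>_. V). \<Sum>g\<in>PiE {..<k} (\<lambda>_. V). x f * x g * (\<Prod>i<k. Gm (f i) (g i)))"
proof -
  let ?PV = "PiE {..<k} (\<lambda>_. V)" and ?PR = "PiE {..<k} (\<lambda>_. R)"
  define W where "W \<rho> = (\<Prod>i<k. w (\<rho> i))" for \<rho> :: "nat \<Rightarrow> 'b"
  define Uf where "Uf \<rho> f = (\<Prod>i<k. U (\<rho> i) (f i))" for \<rho> :: "nat \<Rightarrow> 'b" and f :: "nat \<Rightarrow> 'a"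
  have K: "(\<Prod>i<k. Gm (f i) (g i)) = (\<Sum>\<rho>\<in>?PR. W \<rho> * Uf \<rho> f * Uf \<rho> g)"
    if "f \<in> ?PV" "g \<in> ?PV" for f g
  proof -
    have "(\<Prod>i<k. Gm (f i) (g i)) = (\<Prod>i<k. \<Sum>r\<in>R. w r * U r (f i) * U r (g i))"
      using that by (intro prod.cong) (auto intro!: G)
    also have "\<dots> = (\<Sum>\<rho>\<in>?PR. \<Prod>i<k. w (\<rho> i) * U (\<rho> i) (f i) * U (\<rho> i) (g i))"
      using fin by (subst prod_sum_PiE) auto
    also have "\<dots> = (\<Sum>\<rho>\<in>?PR. W \<rho> * Uf \<rho> f * Uf \<rho> g)"
      unfolding W_def Uf_def by (simp add: prod.distrib)
    finally show ?thesis .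
  qed
  have "(\<Sum>f\<in>?PV. \<Sum>g\<in>?PV. x f * x g * (\<Prod>i<k. Gm (f i) (g i)))
      = (\<Sum>f\<in>?PV. \<Sum>g\<in>?PV. \<Sum>\<rho>\<in>?PR. W \<rho> * ((x f * Uf \<rho> f) * (x g * Uf \<rho> g)))"
    by (intro sum.cong refl) (simp add: K sum_distrib_left mult_ac)
  also have "\<dots> = (\<Sum>\<rho>\<in>?PR. \<Sum>f\<in>?PV. \<Sum>g\<in>?PV. W \<rho> * ((x f * Uf \<rho> f) * (x g * Uf \<rho> g)))"
    by (subst sum.swap) (intro sum.cong refl, rule sum.swap)
  also have "\<dots> = (\<Sum>\<rho>\<in>?PR. W \<rho> * ((\<Sum>f\<in>?PV. x f * Uf \<rho> f) * (\<Sum>g\<in>?PV. x g * Uf \<rho> g)))"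
    unfolding sum_product by (simp add: sum_distrib_left)
  also have "\<dots> \<ge> 0"
    by (rule sum_nonneg, rule mult_nonneg_nonneg) (auto simp: W_def w PiE_iff intro!: prod_nonneg)
  finally show ?thesis by simp
qed

lemma lovasz_power_bound:
  fixes V :: "'a set" and R :: "'b set" and k :: nat and a :: real
  assumes fin: "finite V" "finite R"
    and w: "\<And>r. r\<in>R \<Longrightarrow> w r \<ge> 0"
    and G: "\<And>i j. i\<in>V \<Longrightarrow> j\<in>V \<Longrightarrow> Gm i j = (\<Sum>r\<in>R. w r * U r i * U r j)"
    and diag: "\<And>i. i\<in>V \<Longrightarrow> Gm i i = 1"
    and orth: "\<And>i j. i\<in>V \<Longrightarrow> j\<in>V \<Longrightarrow> i\<noteq>j \<Longrightarrow> \<not> E i j \<Longrightarrow> Gm i j = 0"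
    and rows: "\<And>i. i\<in>V \<Longrightarrow> (\<Sum>j\<in>V. Gm i j) = a" and apos: "a > 0"
    and S: "independent_set (strong_power_vertices V k) (strong_power_adj E k) S"
  shows "real (card S) * a^k \<le> real (card V)^k"
proof -
  let ?PV = "PiE {..<k} (\<lambda>_. V)"
  define K where "K f g = (\<Prod>i<k. Gm (f i) (g i))" for f g :: "nat \<Rightarrow> 'a"
  have SPV: "S \<subseteq> ?PV" using S unfolding independent_set_def strong_power_vertices_def by auto
  have finPV: "finite ?PV" using fin by (simp add: finite_PiE)
  have finS: "finite S" using finite_subset[OF SPV finPV] .
  have sym: "Gm i j = Gm j i" if "i\<in>V" "j\<in>V" for i j using G[OF that] G[OF that(2,1)] by (simp add: mult_ac)
  have KS: "K f g = (if f = g then 1 else 0)" if "f\<in>S" "g\<in>S" for f g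
  proof (cases "f = g")
    case True
    have "f \<in> ?PV" using that SPV by auto
    then show ?thesis using True unfolding K_def by (auto intro!: prod.neutral diag simp: PiE_iff)
  next
    case False
    have "\<not> strong_power_adj E k f g" using S that unfolding independent_set_def by auto
    then obtain i where i: "i<k" "f i \<noteq> g i" "\<not> E (f i) (g i)" using False unfolding strong_power_adj_def by auto
    have "f \<in> ?PV" "g \<in> ?PV" using that SPV by auto
    then have "Gm (f i) (g i) = 0" using i by (intro orth) (auto simp: PiE_iff)
    then have "K f g = 0" unfolding K_def using i by (intro prod_zero) auto
    then show ?thesis using False by simp
  qed
  have row: "(\<Sum>g\<in>?PV. K f g) = a^k" if "f\<in>?PV" for f
  proof -
    have "(\<Sum>g\<in>?PV. K f g) = (\<Prod>i<k. \<Sum>v\<in>V. Gm (f i) v)"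
      unfolding K_def using fin by (subst prod_sum_PiE) auto
    also have "\<dots> = (\<Prod>i<k. a)" using that by (intro prod.cong refl rows) (auto simp: PiE_iff)
    finally show ?thesis by simp
  qed
  have col: "(\<Sum>f\<in>?PV. K f g) = a^k" if "g\<in>?PV" for g
  proof -
    have "(\<Sum>f\<in>?PV. K f g) = (\<Sum>f\<in>?PV. K g f)"
      unfolding K_def using that by (intro sum.cong refl prod.cong sym) (auto simp: PiE_iff)
    then show ?thesis using row[OF that] by simp
  qed
  have cardPV: "card ?PV = card V ^ k" by (simp add: card_PiE)
  have psd: "0 \<le> (\<Sum>f\<in>?PV. \<Sum>g\<in>?PV. x f * x g * K f g)" for x
    unfolding K_def by (rule gram_psd_power[OF fin w G])
  show ?thesis
  proof (cases "S = {}")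
    case True then show ?thesis by simp
  next
    case False
    define \<sigma> where "\<sigma> = real (card S)"
    define c where "c = real (card V)^k"
    have "?PV \<noteq> {}" using False SPV by auto
    then have "card ?PV > 0" using finPV by (simp add: card_gt_0_iff)
    then have cpos: "c > 0" unfolding c_def using cardPV by (metis of_nat_0_less_iff of_nat_power)
    have spos: "\<sigma> > 0" unfolding \<sigma>_def using False finS by (simp add: card_gt_0_iff)
    define s where "s = \<sigma> / c"
    define \<chi> where "\<chi> f = (if f \<in> S then 1 else (0::real))" for f
    have ind: "(\<Sum>f\<in>?PV. \<chi> f * h f) = (\<Sum>f\<in>S. h f)" for h
    proof -
      have "(\<Sum>f\<in>?PV. \<chi> f * h f) = (\<Sum>f\<in>?PV. if f \<in> S then h f else 0)"
        unfolding \<chi>_def by (intro sum.cong) auto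
      also have "\<dots> = (\<Sum>f\<in>?PV \<inter> S. h f)" using sum.inter_restrict[OF finPV, of h S] by simp
      also have "?PV \<inter> S = S" using SPV by auto
      finally show ?thesis .
    qed
    have t1: "(\<Sum>f\<in>?PV. \<Sum>g\<in>?PV. \<chi> f * \<chi> g * K f g) = \<sigma>"
    proof -
      have "(\<Sum>f\<in>?PV. \<Sum>g\<in>?PV. \<chi> f * \<chi> g * K f g) = (\<Sum>f\<in>?PV. \<chi> f * (\<Sum>g\<in>?PV. \<chi> g * K f g))"
        by (simp add: sum_distrib_left mult_ac)
      also have "\<dots> = (\<Sum>f\<in>S. (\<Sum>g\<in>S. K f g))" by (simp add: ind)
      also have "\<dots> = (\<Sum>f\<in>S. 1)" using finS by (intro sum.cong refl) (simp add: KS)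
      finally show ?thesis by (simp add: \<sigma>_def)
    qed
    have t2: "(\<Sum>f\<in>?PV. \<Sum>g\<in>?PV. \<chi> f * K f g) = \<sigma> * a^k"
    proof -
      have "(\<Sum>f\<in>?PV. \<Sum>g\<in>?PV. \<chi> f * K f g) = (\<Sum>f\<in>?PV. \<chi> f * (\<Sum>g\<in>?PV. K f g))"
        by (simp add: sum_distrib_left)
      also have "\<dots> = (\<Sum>f\<in>S. (\<Sum>g\<in>?PV. K f g))" by (simp add: ind)
      also have "\<dots> = (\<Sum>f\<in>S. a^k)" using SPV by (intro sum.cong refl row) auto
      finally show ?thesis by (simp add: \<sigma>_def)
    qed
    have t3: "(\<Sum>f\<in>?PV. \<Sum>g\<in>?PV. \<chi> g * K f g) = \<sigma> * a^k"
    proof -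
      have "(\<Sum>f\<in>?PV. \<Sum>g\<in>?PV. \<chi> g * K f g) = (\<Sum>g\<in>?PV. \<chi> g * (\<Sum>f\<in>?PV. K f g))"
        by (subst sum.swap) (simp add: sum_distrib_left)
      also have "\<dots> = (\<Sum>g\<in>S. (\<Sum>f\<in>?PV. K f g))" by (simp add: ind)
      also have "\<dots> = (\<Sum>g\<in>S. a^k)" using SPV by (intro sum.cong refl col) auto
      finally show ?thesis by (simp add: \<sigma>_def)
    qed
    have t4: "(\<Sum>f\<in>?PV. \<Sum>g\<in>?PV. K f g) = c * a^k"
      using row cardPV by (simp add: c_def)
    define x where "x f = \<chi> f - s" for f
    have "(\<Sum>f\<in>?PV. \<Sum>g\<in>?PV. x f * x g * K f g)
       = (\<Sum>f\<in>?PV. \<Sum>g\<in>?PV. \<chi> f * \<chi> g * K f g) - s * (\<Sum>f\<in>?PV. \<Sum>g\<in>?PV. \<chi> f * K f g)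
         - s * (\<Sum>f\<in>?PV. \<Sum>g\<in>?PV. \<chi> g * K f g) + s^2 * (\<Sum>f\<in>?PV. \<Sum>g\<in>?PV. K f g)"
      unfolding x_def by (simp add: sum_distrib_left sum_subtractf sum.distrib algebra_simps power2_eq_square)
    also have "\<dots> = \<sigma> - 2 * s * \<sigma> * a^k + s^2 * c * a^k" by (simp add: t1 t2 t3 t4)
    finally have "0 \<le> \<sigma> - 2 * s * \<sigma> * a^k + s^2 * c * a^k" using psd[of x] by simp
    also have "\<sigma> - 2 * s * \<sigma> * a^k + s^2 * c * a^k = \<sigma> * (c - \<sigma> * a^k) / c"
      unfolding s_def using cpos by (simp add: field_simps power2_eq_square)
    finally have "0 \<le> c - \<sigma> * a^k" using cpos spos by (simp add: zero_le_divide_iff zero_le_mult_iff)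
    then show ?thesis by (simp add: \<sigma>_def c_def)
  qed
qed




lemma card_filter_sum: "finite A \<Longrightarrow> card {x\<in>A. P x} = (\<Sum>x\<in>A. if P x then 1 else (0::nat))"
  using sum.inter_filter[of A "\<lambda>_. 1::nat" P] by simp

lemma dc1:
  assumes "finite Bs" "finite A"
  shows "(\<Sum>B\<in>Bs. card (B \<inter> A)) = (\<Sum>p\<in>A. card {B\<in>Bs. p\<in>B})"
proof -
  have "(\<Sum>B\<in>Bs. card (B \<inter> A)) = (\<Sum>B\<in>Bs. \<Sum>p\<in>A. if p \<in> B then 1 else (0::nat))"
  proof (intro sum.cong refl)
    fix B assume "B \<in> Bs"
    have "B \<inter> A = {p\<in>A. p\<in>B}" by auto
    then show "card (B \<inter> A) = (\<Sum>p\<in>A. if p \<in> B then 1 else 0)" using assms by (simp add: card_filter_sum)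
  qed
  also have "\<dots> = (\<Sum>p\<in>A. \<Sum>B\<in>Bs. if p \<in> B then 1 else (0::nat))" by (rule sum.swap)
  also have "\<dots> = (\<Sum>p\<in>A. card {B\<in>Bs. p\<in>B})" using assms by (simp add: card_filter_sum)
  finally show ?thesis .
qed

lemma dc2:
  assumes "finite Bs" "finite A" "finite C"
  shows "(\<Sum>B\<in>Bs. card (A \<inter> B) * card (B \<inter> C)) = (\<Sum>p\<in>A. \<Sum>q\<in>C. card {B\<in>Bs. p\<in>B \<and> q\<in>B})"
proof -
  have "(\<Sum>B\<in>Bs. card (A \<inter> B) * card (B \<inter> C)) = (\<Sum>B\<in>Bs. \<Sum>p\<in>A. \<Sum>q\<in>C. if p \<in> B \<and> q \<in> B then 1 else (0::nat))"
  proof (intro sum.cong refl)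
    fix B assume "B \<in> Bs"
    have "A \<inter> B = {p\<in>A. p\<in>B}" "B \<inter> C = {q\<in>C. q\<in>B}" by auto
    then have "card (A \<inter> B) * card (B \<inter> C) = (\<Sum>p\<in>A. if p \<in> B then 1 else 0) * (\<Sum>q\<in>C. if q \<in> B then 1 else 0)"
      using assms by (simp add: card_filter_sum)
    also have "\<dots> = (\<Sum>p\<in>A. \<Sum>q\<in>C. if p \<in> B \<and> q \<in> B then 1 else 0)"
      unfolding sum_product by (intro sum.cong refl) auto
    finally show "card (A \<inter> B) * card (B \<inter> C) = (\<Sum>p\<in>A. \<Sum>q\<in>C. if p \<in> B \<and> q \<in> B then 1 else 0)" .
  qed
  also have "\<dots> = (\<Sum>p\<in>A. \<Sum>B\<in>Bs. \<Sum>q\<in>C. if p \<in> B \<and> q \<in> B then 1 else (0::nat))" by (rule sum.swap)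
  also have "\<dots> = (\<Sum>p\<in>A. \<Sum>q\<in>C. \<Sum>B\<in>Bs. if p \<in> B \<and> q \<in> B then 1 else (0::nat))"
    by (intro sum.cong refl sum.swap)
  also have "\<dots> = (\<Sum>p\<in>A. \<Sum>q\<in>C. card {B\<in>Bs. p\<in>B \<and> q\<in>B})" using assms by (simp add: card_filter_sum)
  finally show ?thesis .
qed

locale td =
  fixes m n :: nat and X :: "'p set" and Gs Bs :: "'p set set"
  assumes TD: "transversal_design m n X Gs Bs" and mn: "m < n"
begin

lemma m2: "m \<ge> 2" and n1: "n \<ge> 1" and finX: "finite X" and cardX: "card X = m * n"
  and part: "partition_on X Gs" and cardGs: "card Gs = m" and cardG: "\<And>G. G\<in>Gs \<Longrightarrow> card G = n"
  and blkX: "\<And>B. B\<in>Bs \<Longrightarrow> B \<subseteq> X" and meet: "\<And>B G. B\<in>Bs \<Longrightarrow> G\<in>Gs \<Longrightarrow> card (B \<inter> G) = 1"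
  and uniq: "\<And>x y. x\<in>X \<Longrightarrow> y\<in>X \<Longrightarrow> \<not> (\<exists>G\<in>Gs. x \<in> G \<and> y \<in> G) \<Longrightarrow> \<exists>!B. B \<in> Bs \<and> x \<in> B \<and> y \<in> B"
  using TD unfolding transversal_design_def by auto

lemma finGs: "finite Gs" using cardGs m2 by (metis card.infinite not_numeral_le_zero)
lemma finBs: "finite Bs"
  using finX blkX by (metis Pow_iff finite_Pow_iff rev_finite_subset subsetI)
lemma finB: "B \<in> Bs \<Longrightarrow> finite B" using finX blkX finite_subset by blast
lemma GX: "G \<in> Gs \<Longrightarrow> G \<subseteq> X" using part unfolding partition_on_def by auto
lemma finG: "G \<in> Gs \<Longrightarrow> finite G" using GX finX finite_subset by blast
lemma group_ex: "p \<in> X \<Longrightarrow> \<exists>G\<in>Gs. p \<in> G" using part unfolding partition_on_def by auto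
lemma group_uniq: "G1 \<in> Gs \<Longrightarrow> G2 \<in> Gs \<Longrightarrow> p \<in> G1 \<Longrightarrow> p \<in> G2 \<Longrightarrow> G1 = G2"
  using part unfolding partition_on_def disjoint_def by blast
lemma meet1: assumes "B \<in> Bs" "G \<in> Gs" obtains q where "B \<inter> G = {q}"
  using meet[OF assms] by (metis card_1_singletonE)

lemma cardB: assumes "B \<in> Bs" shows "card B = m"
proof -
  have "B = (\<Union>G\<in>Gs. B \<inter> G)" using blkX[OF assms] part unfolding partition_on_def by auto
  then have "card B = card (\<Union>G\<in>Gs. B \<inter> G)" by simp
  also have "\<dots> = (\<Sum>G\<in>Gs. card (B \<inter> G))"
    using finGs finB[OF assms] by (intro card_UN_disjoint) (auto dest: group_uniq)
  also have "\<dots> = (\<Sum>G\<in>Gs. 1)" using assms by (intro sum.cong refl meet)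
  finally show ?thesis using cardGs by simp
qed

definition sg :: "'p \<Rightarrow> 'p \<Rightarrow> bool" where "sg p q \<longleftrightarrow> (\<exists>G\<in>Gs. p \<in> G \<and> q \<in> G)"

lemma lam_same: assumes "p \<in> X" shows "card {B\<in>Bs. p\<in>B} = n"
proof -
  obtain Gp where Gp: "Gp \<in> Gs" "p \<in> Gp" using group_ex[OF assms] by blast
  have "card (Gs - {Gp}) = m - 1" using Gp finGs cardGs by simp
  then have "card (Gs - {Gp}) \<ge> 1" using m2 by simp
  then have "Gs - {Gp} \<noteq> {}" by (metis card.empty not_one_le_zero)
  then obtain G' where G': "G' \<in> Gs" "G' \<noteq> Gp" by blast
  have pG': "p \<notin> G'" using G' Gp group_uniq by blast
  have nsg: "\<not> sg p q" if "q \<in> G'" for q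
    using that pG' Gp G' group_uniq unfolding sg_def by metis
  define \<psi> where "\<psi> q = (THE B. B \<in> Bs \<and> p \<in> B \<and> q \<in> B)" for q
  have ex: "\<exists>!B. B \<in> Bs \<and> p \<in> B \<and> q \<in> B" if "q \<in> G'" for q
    using uniq[OF assms, of q] nsg[OF that] GX[OF G'(1)] that unfolding sg_def by auto
  have psi: "\<psi> q \<in> Bs \<and> p \<in> \<psi> q \<and> q \<in> \<psi> q" if "q \<in> G'" for q
    unfolding \<psi>_def using theI'[OF ex[OF that]] .
  have inj: "inj_on \<psi> G'"
  proof (rule inj_onI)
    fix q1 q2 assume q: "q1 \<in> G'" "q2 \<in> G'" "\<psi> q1 = \<psi> q2"
    obtain r where "\<psi> q1 \<inter> G' = {r}" using meet1 psi[OF q(1)] G'(1) by blast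
    then show "q1 = q2" using psi[OF q(1)] psi[OF q(2)] q by (metis IntI singletonD)
  qed
  have img: "\<psi> ` G' = {B\<in>Bs. p\<in>B}"
  proof
    show "\<psi> ` G' \<subseteq> {B\<in>Bs. p\<in>B}" using psi by auto
    show "{B\<in>Bs. p\<in>B} \<subseteq> \<psi> ` G'"
    proof
      fix B assume B: "B \<in> {B\<in>Bs. p\<in>B}"
      obtain q where q: "B \<inter> G' = {q}" using meet1 B G'(1) by blast
      then have "q \<in> G'" "q \<in> B" by auto
      then have "\<psi> q = B" unfolding \<psi>_def using ex[OF \<open>q \<in> G'\<close>] B by (intro the1_equality) auto
      then show "B \<in> \<psi> ` G'" using \<open>q \<in> G'\<close> by auto
    qed
  qed
  have "card {B\<in>Bs. p\<in>B} = card G'" using card_image[OF inj] img by simp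
  then show ?thesis using cardG G' by simp
qed

lemma lam_sg: assumes "p \<noteq> q" "sg p q" shows "card {B\<in>Bs. p\<in>B \<and> q\<in>B} = 0"
proof -
  obtain G where G: "G \<in> Gs" "p \<in> G" "q \<in> G" using assms unfolding sg_def by auto
  have "{B\<in>Bs. p\<in>B \<and> q\<in>B} = {}"
  proof (rule ccontr)
    assume "{B\<in>Bs. p\<in>B \<and> q\<in>B} \<noteq> {}"
    then obtain B where B: "B \<in> Bs" "p \<in> B" "q \<in> B" by auto
    obtain r where "B \<inter> G = {r}" using meet1 B(1) G(1) by blast
    then show False using B G assms(1) by (metis IntI singletonD)
  qed
  then show ?thesis by (simp only: card.empty)
qed

lemma lam_diff: assumes "p \<in> X" "q \<in> X" "\<not> sg p q" shows "card {B\<in>Bs. p\<in>B \<and> q\<in>B} = 1"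
proof -
  have ex: "\<exists>!B. B \<in> Bs \<and> p \<in> B \<and> q \<in> B" using uniq assms unfolding sg_def by auto
  then obtain B0 where "{B\<in>Bs. p\<in>B \<and> q\<in>B} = {B0}" by auto
  then show ?thesis by simp
qed

lemma inter_le1: assumes "B \<in> Bs" "B' \<in> Bs" "B \<noteq> B'" shows "card (B \<inter> B') \<le> 1"
proof (rule ccontr)
  assume "\<not> card (B \<inter> B') \<le> 1"
  moreover have fin: "finite (B \<inter> B')" using finB assms by auto
  ultimately have "\<not> (\<forall>x\<in>B \<inter> B'. \<forall>y\<in>B \<inter> B'. x = y)" using card_le_Suc0_iff_eq[OF fin] by simp
  then obtain p q where pq: "p \<in> B \<inter> B'" "q \<in> B \<inter> B'" "p \<noteq> q" by blast
  show False
  proof (cases "sg p q")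
    case True
    then show False using lam_sg[OF pq(3) True] pq assms finBs by (auto simp: card_eq_0_iff)
  next
    case False
    have "p \<in> X" "q \<in> X" using pq assms blkX by auto
    then have "\<exists>!B. B \<in> Bs \<and> p \<in> B \<and> q \<in> B" using uniq False unfolding sg_def by auto
    then show False using pq assms by auto
  qed
qed

lemma rowsum: assumes "B \<in> Bs" shows "(\<Sum>B'\<in>Bs. card (B' \<inter> B)) = m * n"
proof -
  have "(\<Sum>B'\<in>Bs. card (B' \<inter> B)) = (\<Sum>p\<in>B. card {B'\<in>Bs. p\<in>B'})" using dc1 finBs finB assms by blast
  also have "\<dots> = (\<Sum>p\<in>B. n)" using assms blkX by (intro sum.cong refl lam_same) auto
  finally show ?thesis using cardB[OF assms] by simp
qed

lemma cardBs: "card Bs = n * n"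
proof -
  have "(\<Sum>B\<in>Bs. card (B \<inter> X)) = (\<Sum>p\<in>X. card {B\<in>Bs. p\<in>B})" using dc1 finBs finX by blast
  also have "\<dots> = (\<Sum>p\<in>X. n)" by (intro sum.cong refl lam_same) auto
  also have "(\<Sum>B\<in>Bs. card (B \<inter> X)) = (\<Sum>B\<in>Bs. m)"
    by (intro sum.cong refl) (metis Int_absorb2 blkX cardB)
  finally have "card Bs * m = m * n * n" using cardX by simp
  then show ?thesis using m2 by simp
qed

lemma inner: assumes "p \<in> X" "B' \<in> Bs"
  shows "(\<Sum>q\<in>B'. card {B\<in>Bs. p\<in>B \<and> q\<in>B}) = (m - 1) + (if p \<in> B' then n else 0)"
proof -
  obtain Gp where Gp: "Gp \<in> Gs" "p \<in> Gp" using group_ex[OF assms(1)] by blast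
  obtain q0 where q0: "B' \<inter> Gp = {q0}" using meet1 assms(2) Gp(1) by blast
  have q0B: "q0 \<in> B'" using q0 by auto
  have fin: "finite B'" using finB assms by auto
  have "(\<Sum>q\<in>B'. card {B\<in>Bs. p\<in>B \<and> q\<in>B}) = card {B\<in>Bs. p\<in>B \<and> q0\<in>B} + (\<Sum>q\<in>B'-{q0}. card {B\<in>Bs. p\<in>B \<and> q\<in>B})"
    using fin q0B by (simp add: sum.remove)
  also have "(\<Sum>q\<in>B'-{q0}. card {B\<in>Bs. p\<in>B \<and> q\<in>B}) = (\<Sum>q\<in>B'-{q0}. 1)"
  proof (intro sum.cong refl lam_diff assms(1))
    fix q assume q: "q \<in> B' - {q0}"
    then show "q \<in> X" using blkX assms by auto
    have "q \<notin> Gp" using q q0 by auto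
    then show "\<not> sg p q" using Gp group_uniq unfolding sg_def by metis
  qed
  also have "\<dots> = m - 1" using cardB[OF assms(2)] fin q0B by simp
  also have "card {B\<in>Bs. p\<in>B \<and> q0\<in>B} = (if p \<in> B' then n else 0)"
  proof (cases "p = q0")
    case True
    then show ?thesis using lam_same[OF assms(1)] q0B by simp
  next
    case False
    have "p \<notin> B'" using False q0 Gp by auto
    moreover have "sg p q0" using Gp q0 unfolding sg_def by auto
    ultimately show ?thesis using lam_sg[OF False] by simp
  qed
  finally show ?thesis by simp
qed

lemma c2: assumes "B \<in> Bs" "B' \<in> Bs"
  shows "(\<Sum>B''\<in>Bs. card (B \<inter> B'') * card (B'' \<inter> B')) = n * card (B \<inter> B') + m * (m - 1)"
proof -
  have "(\<Sum>B''\<in>Bs. card (B \<inter> B'') * card (B'' \<inter> B')) = (\<Sum>p\<in>B. \<Sum>q\<in>B'. card {B''\<in>Bs. p\<in>B'' \<and> q\<in>B''})"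
    using dc2 finBs finB assms by blast
  also have "\<dots> = (\<Sum>p\<in>B. (m - 1) + (if p \<in> B' then n else 0))"
    using assms blkX by (intro sum.cong refl inner) auto
  also have "\<dots> = m * (m - 1) + n * card (B \<inter> B')"
  proof -
    have "(\<Sum>p\<in>B. (if p \<in> B' then n else 0)) = n * card (B \<inter> B')"
      using finB[OF assms(1)] by (simp add: sum.If_cases Int_def)
    then show ?thesis using cardB[OF assms(1)] by (simp add: sum.distrib)
  qed
  finally show ?thesis by simp
qed

end



context td begin

definition cc :: "'p set \<Rightarrow> 'p set \<Rightarrow> real" where "cc B B' = real (card (B \<inter> B'))"
definition ee :: real where "ee = (real m - 1) / (real n)^2"
definition dd :: "'p set \<Rightarrow> 'p set \<Rightarrow> real" where "dd B B' = ee - cc B B' / real n"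
definition PP :: "'p set \<Rightarrow> 'p set \<Rightarrow> real" where "PP B B' = (if B = B' then 1 else 0) + dd B B'"

lemma npos: "real n > 0" using n1 by simp

lemma cc_sym: "cc B B' = cc B' B" unfolding cc_def by (simp add: Int_commute)
lemma cc_diag: "B \<in> Bs \<Longrightarrow> cc B B = real m" unfolding cc_def using cardB by simp
lemma cc_off: "B \<in> Bs \<Longrightarrow> B' \<in> Bs \<Longrightarrow> B \<noteq> B' \<Longrightarrow> cc B B' = 0 \<or> cc B B' = 1"
  unfolding cc_def using inter_le1 by (metis le_Suc_eq le_zero_eq of_nat_0 of_nat_1 One_nat_def)
lemma cc_row: "B \<in> Bs \<Longrightarrow> (\<Sum>B'\<in>Bs. cc B' B) = real m * real n"
  unfolding cc_def using rowsum by (metis of_nat_mult of_nat_sum)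
lemma cc_row2: "B \<in> Bs \<Longrightarrow> (\<Sum>B'\<in>Bs. cc B B') = real m * real n"
proof -
  assume a: "B \<in> Bs"
  have "(\<Sum>B'\<in>Bs. cc B B') = (\<Sum>B'\<in>Bs. cc B' B)" by (intro sum.cong refl cc_sym)
  then show ?thesis using cc_row[OF a] by simp
qed
lemma cc2: "i \<in> Bs \<Longrightarrow> j \<in> Bs \<Longrightarrow> (\<Sum>r\<in>Bs. cc i r * cc r j) = real n * cc i j + real m * (real m - 1)"
proof -
  assume a: "i \<in> Bs" "j \<in> Bs"
  have "(\<Sum>r\<in>Bs. cc i r * cc r j) = real (\<Sum>r\<in>Bs. card (i \<inter> r) * card (r \<inter> j))"
    unfolding cc_def by simp
  also have "\<dots> = real (n * card (i \<inter> j) + m * (m - 1))" using c2[OF a] by simp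
  also have "\<dots> = real n * cc i j + real m * (real m - 1)" unfolding cc_def using m2 by (simp add: of_nat_diff)
  finally show ?thesis .
qed
lemma cardBs_real: "real (card Bs) = (real n)^2" using cardBs by (simp add: power2_eq_square)

lemma Pid: assumes "i \<in> Bs" "j \<in> Bs" shows "(\<Sum>r\<in>Bs. PP r i * PP r j) = PP i j"
proof -
  let ?\<delta> = "\<lambda>r i. if r = i then 1 else (0::real)"
  have "(\<Sum>r\<in>Bs. PP r i * PP r j) = (\<Sum>r\<in>Bs. ?\<delta> r i * ?\<delta> r j) + (\<Sum>r\<in>Bs. ?\<delta> r i * dd r j)
     + (\<Sum>r\<in>Bs. dd r i * ?\<delta> r j) + (\<Sum>r\<in>Bs. dd r i * dd r j)"
    unfolding PP_def by (simp add: sum.distrib algebra_simps)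
  also have "(\<Sum>r\<in>Bs. ?\<delta> r i * ?\<delta> r j) = ?\<delta> i j" using assms finBs by (simp add: if_distrib[of "\<lambda>x. x * _"] cong: if_cong)
  also have "(\<Sum>r\<in>Bs. ?\<delta> r i * dd r j) = dd i j" using assms finBs by (simp add: if_distrib[of "\<lambda>x. x * _"] cong: if_cong)
  also have "(\<Sum>r\<in>Bs. dd r i * ?\<delta> r j) = dd i j" using assms finBs
    by (simp add: if_distrib[of "\<lambda>x. _ * x"] dd_def cc_sym cong: if_cong)
  also have "(\<Sum>r\<in>Bs. dd r i * dd r j) = (\<Sum>r\<in>Bs. ee^2 - (ee / real n) * cc r i - (ee / real n) * cc r j + (cc i r * cc r j) / (real n)^2)"
    unfolding dd_def using npos by (intro sum.cong refl) (simp add: cc_sym[of _ i] field_simps power2_eq_square)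
  also have "\<dots> = (real n)^2 * ee^2 - (ee / real n) * (\<Sum>r\<in>Bs. cc r i) - (ee / real n) * (\<Sum>r\<in>Bs. cc r j) + (\<Sum>r\<in>Bs. cc i r * cc r j) / (real n)^2"
    using cardBs_real by (simp add: sum.distrib sum_subtractf sum_distrib_left sum_divide_distrib)
  also have "\<dots> = (real n)^2 * ee^2 - 2 * ee * real m + (real n * cc i j + real m * (real m - 1)) / (real n)^2"
    using cc_row assms cc2 npos by simp
  also have "\<dots> = - dd i j"
    unfolding dd_def ee_def using npos by (simp add: field_simps power2_eq_square)
  finally show ?thesis unfolding PP_def by simp
qed

end



context td begin

lemma compl_iff: "i \<in> Bs \<Longrightarrow> j \<in> Bs \<Longrightarrow> complement_graph LSG_adj i j \<longleftrightarrow> i \<noteq> j \<and> cc i j = 0"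
  unfolding complement_graph_def LSG_adj_def using cc_off unfolding cc_def by fastforce

lemma theta_ub:
  assumes psd: "psd_on Bs B" and tr: "(\<Sum>i\<in>Bs. B i i) = 1"
    and z: "\<forall>i\<in>Bs. \<forall>j\<in>Bs. complement_graph LSG_adj i j \<longrightarrow> B i j = 0"
  shows "(\<Sum>i\<in>Bs. \<Sum>j\<in>Bs. B i j) \<le> real n"
proof -
  define s where "s = (\<Sum>i\<in>Bs. \<Sum>j\<in>Bs. B i j)"
  have "(\<Sum>i\<in>Bs. \<Sum>j\<in>Bs. B i j * PP i j) = (\<Sum>i\<in>Bs. \<Sum>j\<in>Bs. B i j * (\<Sum>r\<in>Bs. PP r i * PP r j))"
    by (intro sum.cong refl) (simp add: Pid)
  also have "\<dots> = (\<Sum>i\<in>Bs. \<Sum>j\<in>Bs. \<Sum>r\<in>Bs. PP r i * B i j * PP r j)"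
    by (simp add: sum_distrib_left mult_ac)
  also have "\<dots> = (\<Sum>i\<in>Bs. \<Sum>r\<in>Bs. \<Sum>j\<in>Bs. PP r i * B i j * PP r j)"
    by (rule sum.cong[OF refl], rule sum.swap)
  also have "\<dots> = (\<Sum>r\<in>Bs. \<Sum>i\<in>Bs. \<Sum>j\<in>Bs. PP r i * B i j * PP r j)"
    by (rule sum.swap)
  also have "\<dots> \<ge> 0"
  proof (rule sum_nonneg)
    fix r assume "r \<in> Bs"
    show "0 \<le> (\<Sum>i\<in>Bs. \<Sum>j\<in>Bs. PP r i * B i j * PP r j)" using psd unfolding psd_on_def by blast
  qed
  finally have nn: "0 \<le> (\<Sum>i\<in>Bs. \<Sum>j\<in>Bs. B i j * PP i j)" .
  have pt: "B i j * PP i j = (if i = j then B i j else 0) * (1 - (real m - 1) / real n) + B i j * (ee - 1 / real n)"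
    if "i \<in> Bs" "j \<in> Bs" for i j
  proof (cases "i = j")
    case True then show ?thesis using that cc_diag npos unfolding PP_def dd_def by (simp add: field_simps)
  next
    case False
    from cc_off[OF that False] consider "cc i j = 0" | "cc i j = 1" by blast
    then show ?thesis
    proof cases
      case 1
      then have "B i j = 0" using z that False compl_iff by blast
      then show ?thesis using False by simp
    next
      case 2 then show ?thesis using False unfolding PP_def dd_def by simp
    qed
  qed
  have "(\<Sum>i\<in>Bs. \<Sum>j\<in>Bs. B i j * PP i j) = (\<Sum>i\<in>Bs. \<Sum>j\<in>Bs. (if i = j then B i j else 0) * (1 - (real m - 1) / real n) + B i j * (ee - 1 / real n))"
    by (intro sum.cong refl pt)
  also have "\<dots> = (1 - (real m - 1) / real n) * (\<Sum>i\<in>Bs. \<Sum>j\<in>Bs. (if i = j then B i j else 0)) + (ee - 1 / real n) * s"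
    unfolding s_def by (simp add: sum.distrib sum_distrib_left sum_distrib_right mult.commute)
  also have "(\<Sum>i\<in>Bs. \<Sum>j\<in>Bs. (if i = j then B i j else 0)) = 1"
    using tr finBs by (simp cong: if_cong)
  finally have "0 \<le> (1 - (real m - 1) / real n) + (ee - 1 / real n) * s" using nn by simp
  then have "0 \<le> real n ^ 2 * ((1 - (real m - 1) / real n) + (ee - 1 / real n) * s)" using npos by simp
  also have "real n ^ 2 * ((1 - (real m - 1) / real n) + (ee - 1 / real n) * s) = (real n - s) * (real n + 1 - real m)"
    unfolding ee_def using npos by (simp add: field_simps power2_eq_square)
  finally have "0 \<le> (real n - s) * (real n + 1 - real m)" .
  moreover have "real n + 1 - real m > 0" using mn by simp
  ultimately have "real n - s \<ge> 0" by (simp add: zero_le_mult_iff)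
  then show ?thesis unfolding s_def by simp
qed

definition tt :: real where "tt = real n / (real n + 1 - real m)"

lemma hd0: "real n + 1 - real m > 0" using mn by simp

lemma diag_calc: "1 / real n + tt * (1 + ee - real m / real n) = 1"
proof -
  have X: "1 + ee - real m / real n = (real n - 1) * (real n + 1 - real m) / real n ^ 2"
    unfolding ee_def using npos by (simp add: field_simps power2_eq_square)
  have L: "(a / d) * ((a - 1) * d / a ^ 2) = (a - 1) / a" if "d \<noteq> 0" "a \<noteq> 0" for a d :: real
    using that by (simp add: field_simps power2_eq_square)
  have "tt * (1 + ee - real m / real n) = (real n / (real n + 1 - real m)) * ((real n - 1) * (real n + 1 - real m) / real n ^ 2)"
    by (simp only: tt_def X)
  also have "\<dots> = (real n - 1) / real n" by (rule L) (use hd0 npos in auto)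
  finally have "tt * (1 + ee - real m / real n) = (real n - 1) / real n" .
  then show ?thesis using npos by (simp add: field_simps)
qed

lemma off_calc: "1 / real n + tt * (ee - 1 / real n) = 0"
proof -
  have X: "ee - 1 / real n = - (real n + 1 - real m) / real n ^ 2"
    unfolding ee_def using npos by (simp add: field_simps power2_eq_square)
  have L: "(a / d) * (- d / a ^ 2) = - 1 / a" if "d \<noteq> 0" "a \<noteq> 0" for a d :: real
    using that by (simp add: field_simps power2_eq_square)
  have "tt * (ee - 1 / real n) = (real n / (real n + 1 - real m)) * (- (real n + 1 - real m) / real n ^ 2)"
    by (simp only: tt_def X)
  also have "\<dots> = - 1 / real n" by (rule L) (use hd0 npos in auto)
  finally have E: "tt * (ee - 1 / real n) = - 1 / real n" .
  show ?thesis unfolding E by simp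
qed

lemma power_ub:
  assumes S: "independent_set (strong_power_vertices Bs k) (strong_power_adj (complement_graph LSG_adj) k) S"
  shows "card S \<le> n ^ k"
proof -
  define R where "R = insert None (Some ` Bs)"
  define w where "w r = (case r of None \<Rightarrow> 1 / real n | Some _ \<Rightarrow> tt)" for r :: "'p set option"
  define U where "U r i = (case r of None \<Rightarrow> 1 | Some r' \<Rightarrow> PP r' i)" for r :: "'p set option" and i
  define Gm where "Gm i j = 1 / real n + tt * PP i j" for i j
  have ttpos: "tt > 0" unfolding tt_def using mn npos by simp
  have hd: "real n + 1 - real m \<noteq> 0" using mn by simp
  have "real (card S) * real n ^ k \<le> real (card Bs) ^ k"
  proof (rule lovasz_power_bound[where R = R and w = w and U = U and Gm = Gm, OF finBs _ _ _ _ _ _ _ S])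
    show "finite R" unfolding R_def using finBs by simp
    show "0 \<le> w r" if "r \<in> R" for r unfolding w_def using ttpos npos by (cases r) auto
    show "Gm i j = (\<Sum>r\<in>R. w r * U r i * U r j)" if "i \<in> Bs" "j \<in> Bs" for i j
    proof -
      have "(\<Sum>r\<in>R. w r * U r i * U r j) = 1 / real n + (\<Sum>r\<in>Bs. tt * PP r i * PP r j)"
        unfolding R_def using finBs by (simp add: sum.reindex w_def U_def)
      also have "\<dots> = 1 / real n + tt * PP i j" using Pid[OF that] by (simp add: mult.assoc flip: sum_distrib_left)
      finally show ?thesis unfolding Gm_def by simp
    qed
    show "Gm i i = 1" if "i \<in> Bs" for i
      unfolding Gm_def PP_def dd_def using cc_diag[OF that] diag_calc by (simp add: algebra_simps)
    show "Gm i j = 0" if "i \<in> Bs" "j \<in> Bs" "i \<noteq> j" "\<not> complement_graph LSG_adj i j" for i j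
    proof -
      have "cc i j = 1" using that compl_iff cc_off by blast
      then show ?thesis unfolding Gm_def PP_def dd_def using that off_calc by simp
    qed
    show "(\<Sum>j\<in>Bs. Gm i j) = real n" if "i \<in> Bs" for i
    proof -
      have "(\<Sum>j\<in>Bs. Gm i j) = real (card Bs) / real n + tt * (1 + real (card Bs) * ee - (\<Sum>j\<in>Bs. cc i j) / real n)"
        unfolding Gm_def PP_def dd_def using finBs that
        by (simp add: sum.distrib sum_distrib_left sum_subtractf sum_divide_distrib algebra_simps if_distrib[of "\<lambda>x. _ * x"] cong: if_cong)
      also have "\<dots> = real n" unfolding cardBs_real cc_row2[OF that] ee_def using npos
        by (simp add: field_simps power2_eq_square)
      finally show ?thesis .
    qed
    show "real n > 0" using npos .
  qed
  then have "real (card S) * real n ^ k \<le> (real n ^ k) * (real n ^ k)"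
    using cardBs_real by (simp add: power_mult_distrib[symmetric] power2_eq_square)
  then have "real (card S) \<le> real n ^ k" using npos by simp
  then show ?thesis by (simp flip: of_nat_power)
qed

end



lemma sum_restr: "finite V \<Longrightarrow> S \<subseteq> V \<Longrightarrow> (\<Sum>i\<in>V. if i \<in> S then f i else 0) = (\<Sum>i\<in>S. f i)"
  using sum.inter_restrict[of V f S] by (simp add: Int_absorb1)

lemma clique_feasible:
  fixes V :: "'a set" and S and E
  assumes fin: "finite V" and SV: "S \<subseteq> V" and ne: "S \<noteq> {}" and ind: "\<forall>x\<in>S. \<forall>y\<in>S. \<not> E x y"
  shows "\<exists>Bm. psd_on V Bm \<and> (\<Sum>i\<in>V. Bm i i) = 1 \<and> (\<forall>i\<in>V. \<forall>j\<in>V. E i j \<longrightarrow> Bm i j = 0)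
     \<and> (\<Sum>i\<in>V. \<Sum>j\<in>V. Bm i j) = real (card S)"
proof -
  define c where "c = real (card S)"
  have finS: "finite S" using fin SV finite_subset by blast
  have cpos: "c > 0" unfolding c_def using finS ne by (simp add: card_gt_0_iff)
  define Bm where "Bm i j = (if i \<in> S \<and> j \<in> S then 1 / c else 0)" for i j
  have psd: "psd_on V Bm"
    unfolding psd_on_def
  proof (intro conjI allI ballI)
    show "Bm i j = Bm j i" for i j unfolding Bm_def by auto
    fix x :: "'a \<Rightarrow> real"
    have "(\<Sum>i\<in>V. \<Sum>j\<in>V. x i * Bm i j * x j) = (\<Sum>i\<in>V. if i \<in> S then (\<Sum>j\<in>V. if j \<in> S then x i * x j / c else 0) else 0)"
      unfolding Bm_def by (auto intro!: sum.cong)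
    also have "\<dots> = (\<Sum>i\<in>S. \<Sum>j\<in>S. x i * x j / c)" using fin SV by (simp add: sum_restr)
    also have "\<dots> = (\<Sum>i\<in>S. x i) * (\<Sum>j\<in>S. x j) / c" by (simp add: sum_product sum_divide_distrib)
    also have "\<dots> \<ge> 0" using cpos by simp
    finally show "0 \<le> (\<Sum>i\<in>V. \<Sum>j\<in>V. x i * Bm i j * x j)" .
  qed
  have tr: "(\<Sum>i\<in>V. Bm i i) = 1"
  proof -
    have "(\<Sum>i\<in>V. Bm i i) = (\<Sum>i\<in>V. if i \<in> S then 1 / c else 0)" unfolding Bm_def by simp
    also have "\<dots> = (\<Sum>i\<in>S. 1 / c)" using fin SV by (simp add: sum_restr)
    finally show ?thesis using cpos unfolding c_def by simp
  qed
  have z: "\<forall>i\<in>V. \<forall>j\<in>V. E i j \<longrightarrow> Bm i j = 0" using ind unfolding Bm_def by auto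
  have s: "(\<Sum>i\<in>V. \<Sum>j\<in>V. Bm i j) = c"
  proof -
    have "(\<Sum>i\<in>V. \<Sum>j\<in>V. Bm i j) = (\<Sum>i\<in>V. if i \<in> S then (\<Sum>j\<in>V. if j \<in> S then 1 / c else 0) else 0)"
      unfolding Bm_def by (intro sum.cong refl) auto
    also have "\<dots> = (\<Sum>i\<in>S. \<Sum>j\<in>S. 1 / c)" using fin SV by (simp add: sum_restr)
    finally show ?thesis using cpos unfolding c_def by simp
  qed
  have "psd_on V Bm \<and> (\<Sum>i\<in>V. Bm i i) = 1 \<and> (\<forall>i\<in>V. \<forall>j\<in>V. E i j \<longrightarrow> Bm i j = 0)
     \<and> (\<Sum>i\<in>V. \<Sum>j\<in>V. Bm i j) = real (card S)" using psd tr z s unfolding c_def by (intro conjI)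
  then show ?thesis by (rule exI[where x=Bm])
qed

theorem mainTheorem2:
  fixes m n :: nat and X :: "'p set" and Gs Bs :: "'p set set"
  assumes "2 \<le> m" and "m < n"
    and "transversal_design m n X Gs Bs"
  shows "real (independence_number Bs (complement_graph LSG_adj)) = real n
     \<and> shannon_capacity Bs (complement_graph LSG_adj) = real n
     \<and> lovasz_theta Bs (complement_graph LSG_adj) = real n"
proof -
  interpret td m n X Gs Bs using assms by unfold_locales auto
  define E :: "'p set \<Rightarrow> 'p set \<Rightarrow> bool" where "E = complement_graph LSG_adj"
  have "card X > 0" using cardX m2 n1 by simp
  then obtain p where p: "p \<in> X" by (metis card.empty ex_in_conv less_irrefl)
  define S0 where "S0 = {B\<in>Bs. p\<in>B}"
  have S0card: "card S0 = n" unfolding S0_def using lam_same[OF p] .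
  have S0Bs: "S0 \<subseteq> Bs" unfolding S0_def by auto
  have S0ind: "\<not> E x y" if "x \<in> S0" "y \<in> S0" for x y
  proof
    assume e: "E x y"
    then have "x \<noteq> y \<and> cc x y = 0" using compl_iff that S0Bs unfolding E_def by blast
    moreover have "p \<in> x \<inter> y" using that unfolding S0_def by auto
    moreover have "finite (x \<inter> y)" using finB that S0Bs by blast
    ultimately show False unfolding cc_def by (simp add: card_eq_0_iff)
  qed
  have S0ne: "S0 \<noteq> {}" using S0card n1 by auto
  have theta_ub': "(\<Sum>i\<in>Bs. \<Sum>j\<in>Bs. B i j) \<le> real n"
    if "psd_on Bs B" "(\<Sum>i\<in>Bs. B i i) = 1" "\<forall>i\<in>Bs. \<forall>j\<in>Bs. E i j \<longrightarrow> B i j = 0" for B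
    using theta_ub[OF that[unfolded E_def]] .
  have theta_set_ub: "y \<le> real n" if "y \<in> {(\<Sum>i\<in>Bs. \<Sum>j\<in>Bs. B i j) | B.
      psd_on Bs B \<and> (\<Sum>i\<in>Bs. B i i) = 1 \<and> (\<forall>i\<in>Bs. \<forall>j\<in>Bs. E i j \<longrightarrow> B i j = 0)}" for y
  proof -
    from that obtain B where "y = (\<Sum>i\<in>Bs. \<Sum>j\<in>Bs. B i j)" "psd_on Bs B" "(\<Sum>i\<in>Bs. B i i) = 1"
      "\<forall>i\<in>Bs. \<forall>j\<in>Bs. E i j \<longrightarrow> B i j = 0" by auto
    then show ?thesis using theta_ub' by simp
  qed
  have indep_ub: "card S \<le> n" if "independent_set Bs E S" for S
  proof (cases "S = {}")
    case True then show ?thesis by simp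
  next
    case False
    have "S \<subseteq> Bs" "\<forall>x\<in>S. \<forall>y\<in>S. \<not> E x y" using that unfolding independent_set_def by auto
    from clique_feasible[OF finBs this(1) False this(2)] obtain Bm where
      "psd_on Bs Bm" "(\<Sum>i\<in>Bs. Bm i i) = 1" "\<forall>i\<in>Bs. \<forall>j\<in>Bs. E i j \<longrightarrow> Bm i j = 0"
      "(\<Sum>i\<in>Bs. \<Sum>j\<in>Bs. Bm i j) = real (card S)" by blast
    then have "real (card S) \<le> real n" using theta_ub' by metis
    then show ?thesis by simp
  qed
  have alpha: "independence_number Bs E = n"
    unfolding independence_number_def
  proof (rule Max_eqI)
    show "finite {card S |S. independent_set Bs E S}"
      by (rule finite_subset[of _ "card ` Pow Bs"]) (auto simp: independent_set_def finBs)
    show "y \<le> n" if "y \<in> {card S |S. independent_set Bs E S}" for y using that indep_ub by auto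
    have "independent_set Bs E S0" unfolding independent_set_def using S0Bs S0ind by auto
    then show "n \<in> {card S |S. independent_set Bs E S}" using S0card by auto
  qed
  have power: "independence_number (strong_power_vertices Bs k) (strong_power_adj E k) = n ^ k" for k
    unfolding independence_number_def
  proof (rule Max_eqI)
    show "finite {card S |S. independent_set (strong_power_vertices Bs k) (strong_power_adj E k) S}"
      by (rule finite_subset[of _ "card ` Pow (strong_power_vertices Bs k)"])
        (auto simp: independent_set_def finBs strong_power_vertices_def finite_PiE)
    show "y \<le> n ^ k" if "y \<in> {card S |S. independent_set (strong_power_vertices Bs k) (strong_power_adj E k) S}" for y
      using that power_ub unfolding E_def by auto
    define S0k where "S0k = PiE {..<k} (\<lambda>_. S0)"
    have "card S0k = n ^ k" unfolding S0k_def by (simp add: card_PiE S0card)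
    moreover have "independent_set (strong_power_vertices Bs k) (strong_power_adj E k) S0k"
      unfolding independent_set_def
    proof (intro conjI ballI)
      show "S0k \<subseteq> strong_power_vertices Bs k" unfolding S0k_def strong_power_vertices_def
        using S0Bs by (auto simp: PiE_iff)
      fix f g assume fg: "f \<in> S0k" "g \<in> S0k"
      show "\<not> strong_power_adj E k f g"
      proof
        assume a: "strong_power_adj E k f g"
        then have "f \<noteq> g" unfolding strong_power_adj_def by auto
        then obtain i where i: "i \<in> {..<k}" "f i \<noteq> g i" using PiE_ext fg unfolding S0k_def by metis
        then have "E (f i) (g i)" using a unfolding strong_power_adj_def by auto
        moreover have "f i \<in> S0" "g i \<in> S0" using fg i unfolding S0k_def by (auto simp: PiE_iff)
        ultimately show False using S0ind by blast
      qed
    qed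
    ultimately show "n ^ k \<in> {card S |S. independent_set (strong_power_vertices Bs k) (strong_power_adj E k) S}"
      by (intro CollectI exI[of _ S0k]) simp
  qed
  have shannon: "shannon_capacity Bs E = real n"
  proof -
    have img: "(\<lambda>k. root k (real (independence_number (strong_power_vertices Bs k) (strong_power_adj E k)))) ` {1..}
        = (\<lambda>k::nat. real n) ` {1..}"
    proof (rule image_cong[OF refl])
      fix k :: nat assume "k \<in> {1..}"
      then have "k > 0" by simp
      then show "root k (real (independence_number (strong_power_vertices Bs k) (strong_power_adj E k))) = real n"
        unfolding power by (simp add: real_root_power_cancel)
    qed
    show "shannon_capacity Bs E = real n"
      unfolding shannon_capacity_def img by simp
  qed
  have theta: "lovasz_theta Bs E = real n"
    unfolding lovasz_theta_def
  proof (rule cSup_eq_maximum)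
    from clique_feasible[OF finBs S0Bs S0ne] S0ind obtain Bm where
      "psd_on Bs Bm" "(\<Sum>i\<in>Bs. Bm i i) = 1" "\<forall>i\<in>Bs. \<forall>j\<in>Bs. E i j \<longrightarrow> Bm i j = 0"
      "(\<Sum>i\<in>Bs. \<Sum>j\<in>Bs. Bm i j) = real (card S0)" by blast
    then show "real n \<in> {(\<Sum>i\<in>Bs. \<Sum>j\<in>Bs. B i j) | B.
      psd_on Bs B \<and> (\<Sum>i\<in>Bs. B i i) = 1 \<and> (\<forall>i\<in>Bs. \<forall>j\<in>Bs. E i j \<longrightarrow> B i j = 0)}"
      using S0card by (intro CollectI exI[of _ Bm]) simp
  qed (rule theta_set_ub)
  show ?thesis using alpha shannon theta unfolding E_def by simp
qed


end
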